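(* Let $C$ be a weakly compact convex subset of a Banach space $X$ and let $T:C\to C$ be an orbitally Kannan mapping which diminishes the radius of orbits. Then the following are equivalent: (1) $T$ has a unique fixed point; (2) $\inf\{r_x(O_T(x)):x\in C\}=0$; (3) for every $x\in C$ with $r_x(O_T(x))>0$ there exists $y\in C$ with $r_x(O_T(x))>r_y(O_T(y))$.
   Context: For $x\in X$ and $A\subseteq X$, $r_x(A)=\sup\{\|x-y\|:y\in A\}$; $O_T(x)=\{x,Tx,T^2x,\dots\}$. $T$ is orbitally Kannan if $\|Tx-Ty\|\le\frac12\big(r_x(O_T(x))+r_y(O_T(y))\big)$ for all $x,y\in C$. $T$ diminishes the radius of orbits if $r_{Tx}(O_T(Tx))\le r_x(O_T(x))$ for all $x\in C$. *)

theory Defs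
  imports "HOL-Analysis.Analysis"
begin

definition weak_topology :: "'a::real_normed_vector topology" where
  "weak_topology = topology (generate_topology
      {f -` U | (f :: 'a \<Rightarrow> real) U. bounded_linear f \<and> open U})"

definition weakly_compact :: "'a::real_normed_vector set \<Rightarrow> bool" where
  "weakly_compact C \<longleftrightarrow> compactin weak_topology C"

definition orbit :: "('a \<Rightarrow> 'a) \<Rightarrow> 'a \<Rightarrow> 'a set" where
  "orbit T x = {(T ^^ n) x | n. True}"

definition rad :: "'a::real_normed_vector \<Rightarrow> 'a set \<Rightarrow> real" where
  "rad x A = (SUP y\<in>A. norm (x - y))"

definition orbitally_kannan :: "'a::real_normed_vector set \<Rightarrow> ('a \<Rightarrow> 'a) \<Rightarrow> bool" where
  "orbitally_kannan C T \<longleftrightarrow> (\<forall>x\<in>C. \<forall>y\<in>C.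
     norm (T x - T y) \<le> (rad x (orbit T x) + rad y (orbit T y)) / 2)"

definition diminishes_orbit_radius :: "'a::real_normed_vector set \<Rightarrow> ('a \<Rightarrow> 'a) \<Rightarrow> bool" where
  "diminishes_orbit_radius C T \<longleftrightarrow> (\<forall>x\<in>C. rad (T x) (orbit T (T x)) \<le> rad x (orbit T x))"

end

theory Submission imports Defs begin
definition good :: "'a::real_normed_vector \<Rightarrow> ('a \<times> real) set \<Rightarrow> bool" where
  "good v G \<longleftrightarrow> subspace G \<and> (v, norm v) \<in> G \<and> (\<forall>p\<in>G. snd p \<le> norm (fst p))"

lemma good_fun:
  assumes "good v G" "(x,a) \<in> G" "(x,b) \<in> G" shows "a = b"
proof -
  have s: "subspace G" and le: "\<forall>p\<in>G. snd p \<le> norm (fst p)" using assms(1) unfolding good_def by blast+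
  have "(x,a) - (x,b) \<in> G" by (rule subspace_diff[OF s assms(2,3)])
  moreover have "(x,b) - (x,a) \<in> G" by (rule subspace_diff[OF s assms(3,2)])
  ultimately have "(0, a - b) \<in> G" "(0, b - a) \<in> G" by simp_all
  then have "a - b \<le> 0" "b - a \<le> 0" using le[rule_format] by force+
  then show ?thesis by simp
qed

lemma extend_step:
  fixes M :: "('a::real_normed_vector \<times> real) set"
  assumes g: "good v M" and x: "\<forall>a. (x,a) \<notin> M"
  shows "\<exists>M'. good v M' \<and> M \<subseteq> M' \<and> M' \<noteq> M"
proof -
  have s: "subspace M" and le: "\<And>y a. (y,a)\<in>M \<Longrightarrow> a \<le> norm y" and vM: "(v, norm v) \<in> M"
    using g by (auto simp: good_def)
  have sc: "(c *\<^sub>R y, c * a) \<in> M" if "(y,a) \<in> M" for c y a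
    using subspace_scale[OF s that, of c] by simp
  define L where "L = {a - norm (y - x) | y a. (y,a) \<in> M}"
  define \<alpha> where "\<alpha> = Sup L"
  have 0: "(0,0) \<in> M" using subspace_0[OF s] by (simp add: zero_prod_def)
  have key: "a - norm (y - x) \<le> norm (z + x) - b" if "(y,a)\<in>M" "(z,b)\<in>M" for y a z b
  proof -
    have "(y + z, a + b) \<in> M" using subspace_add[OF s that] by simp
    then have "a + b \<le> norm (y + z)" by (rule le)
    also have "norm (y + z) \<le> norm (y - x) + norm (z + x)"
      using norm_triangle_ineq[of "y - x" "z + x"] by simp
    finally show ?thesis by simp
  qed
  have Lne: "L \<noteq> {}" using 0 unfolding L_def by blast
  have up: "a - norm (y - x) \<le> \<alpha>" if "(y,a)\<in>M" for y a
    unfolding \<alpha>_def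
    apply (rule cSup_upper)
    using that apply (auto simp: L_def)[1]
    unfolding bdd_above_def L_def using key[OF _ 0] by fastforce
  have lo: "\<alpha> \<le> norm (z + x) - b" if "(z,b)\<in>M" for z b
    unfolding \<alpha>_def
    apply (rule cSup_least[OF Lne])
    using key[OF _ that] unfolding L_def by blast
  define M' where "M' = {(y + t *\<^sub>R x, a + t * \<alpha>) | y a t. (y,a) \<in> M}"
  have ineq: "a + t * \<alpha> \<le> norm (y + t *\<^sub>R x)" if "(y,a) \<in> M" for y a t
  proof -
    consider "t = 0" | "t > 0" | "t < 0" by linarith
    then show ?thesis
    proof cases
      case 1 then show ?thesis using le[OF that] by simp
    next
      case 2
      have "(inverse t *\<^sub>R y, inverse t * a) \<in> M" by (rule sc[OF that])
      from lo[OF this] have "t * \<alpha> \<le> t * (norm (inverse t *\<^sub>R y + x) - inverse t * a)"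
        using 2 by (simp add: mult_left_mono)
      also have "\<dots> = norm (t *\<^sub>R (inverse t *\<^sub>R y + x)) - a"
        using 2 by (simp add: right_diff_distrib)
      also have "t *\<^sub>R (inverse t *\<^sub>R y + x) = y + t *\<^sub>R x"
        using 2 by (simp add: scaleR_add_right)
      finally show ?thesis by simp
    next
      case 3
      define s where "s = - t"
      have sp: "s > 0" using 3 s_def by simp
      have "(inverse s *\<^sub>R y, inverse s * a) \<in> M" by (rule sc[OF that])
      from up[OF this] have "s * (inverse s * a - norm (inverse s *\<^sub>R y - x)) \<le> s * \<alpha>"
        using sp by (simp add: mult_left_mono)
      also have "s * (inverse s * a - norm (inverse s *\<^sub>R y - x)) = a - norm (s *\<^sub>R (inverse s *\<^sub>R y - x))"
        using sp by (simp add: right_diff_distrib)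
      also have "s *\<^sub>R (inverse s *\<^sub>R y - x) = y + t *\<^sub>R x"
        using sp by (simp add: scaleR_diff_right s_def)
      finally show ?thesis using s_def by simp
    qed
  qed
  have sub': "subspace M'"
    unfolding subspace_def
  proof (intro conjI ballI allI)
    show "0 \<in> M'" unfolding M'_def using 0 by (force simp: zero_prod_def)
  next
    fix p q assume "p \<in> M'" "q \<in> M'"
    then obtain y a t z b u where p: "p = (y + t *\<^sub>R x, a + t * \<alpha>)" "(y,a)\<in>M"
      and q: "q = (z + u *\<^sub>R x, b + u * \<alpha>)" "(z,b)\<in>M" unfolding M'_def by blast
    have "(y + z, a + b) \<in> M" using subspace_add[OF s p(2) q(2)] by simp
    moreover have "p + q = ((y + z) + (t + u) *\<^sub>R x, (a + b) + (t + u) * \<alpha>)"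
      using p q by (simp add: algebra_simps)
    ultimately show "p + q \<in> M'" unfolding M'_def by blast
  next
    fix c :: real and p assume "p \<in> M'"
    then obtain y a t where p: "p = (y + t *\<^sub>R x, a + t * \<alpha>)" "(y,a)\<in>M" unfolding M'_def by blast
    have "c *\<^sub>R p = (c *\<^sub>R y + (c * t) *\<^sub>R x, c * a + (c * t) * \<alpha>)"
      using p by (simp add: algebra_simps)
    then show "c *\<^sub>R p \<in> M'" unfolding M'_def using sc[OF p(2)] by blast
  qed
  have "M \<subseteq> M'"
  proof
    fix p assume "p \<in> M"
    then show "p \<in> M'" unfolding M'_def by (cases p) force
  qed
  moreover have "(x, \<alpha>) \<in> M'" unfolding M'_def using 0 by force
  moreover have "good v M'"
  proof -
    have "\<forall>p\<in>M'. snd p \<le> norm (fst p)" unfolding M'_def using ineq by force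
    then show ?thesis unfolding good_def using sub' \<open>M \<subseteq> M'\<close> vM by blast
  qed
  moreover have "(x, \<alpha>) \<notin> M" using x by simp
  ultimately have "good v M' \<and> M \<subseteq> M' \<and> M' \<noteq> M" by blast
  then show ?thesis by (rule exI)
qed

lemma goodD1: "good v G \<Longrightarrow> subspace G" unfolding good_def by blast
lemma goodD2: "good v G \<Longrightarrow> (v, norm v) \<in> G" unfolding good_def by blast
lemma goodD3: "good v G \<Longrightarrow> (x, a) \<in> G \<Longrightarrow> a \<le> norm x"
  unfolding good_def by (metis fst_conv snd_conv)
lemma goodI: "subspace G \<Longrightarrow> (v, norm v) \<in> G \<Longrightarrow> (\<And>x a. (x, a) \<in> G \<Longrightarrow> a \<le> norm x) \<Longrightarrow> good v G"
  unfolding good_def by auto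

lemma hahn_banach_norm:
  fixes v :: "'a::real_normed_vector"
  shows "\<exists>f. bounded_linear f \<and> (\<forall>y. f y \<le> norm y) \<and> f v = norm v"
proof -
  define A where "A = Collect (good v)"
  define G0 where "G0 = span {(v, norm v)}"
  have G0: "good v G0"
  proof (rule goodI)
    show "subspace G0" unfolding G0_def by (rule subspace_span)
    show "(v, norm v) \<in> G0" unfolding G0_def by (rule span_base) simp
    fix x a assume "(x, a) \<in> G0"
    then obtain t where "(x, a) = t *\<^sub>R (v, norm v)" unfolding G0_def span_singleton by blast
    then have xa: "x = t *\<^sub>R v" "a = t * norm v" by simp_all
    have "t * norm v \<le> \<bar>t\<bar> * norm v" by (rule mult_right_mono[OF abs_ge_self norm_ge_zero])
    then show "a \<le> norm x" using xa by simp
  qed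
  have "\<exists>M\<in>A. \<forall>X\<in>A. M \<subseteq> X \<longrightarrow> X = M"
  proof (rule Zorn_Lemma2, intro ballI)
    fix Ch assume ch: "Ch \<in> chains A"
    show "\<exists>U\<in>A. \<forall>X\<in>Ch. X \<subseteq> U"
    proof (cases "Ch = {}")
      case True
      have "G0 \<in> A" unfolding A_def using G0 by simp
      then show ?thesis using True by blast
    next
      case False
      have chA: "Ch \<subseteq> A" and chc: "\<forall>X\<in>Ch. \<forall>Y\<in>Ch. X \<subseteq> Y \<or> Y \<subseteq> X"
        using ch unfolding chains_def chain_subset_def by auto
      have gX: "X \<in> Ch \<Longrightarrow> good v X" for X using chA unfolding A_def by blast
      obtain X0 where X0: "X0 \<in> Ch" using False by blast
      have "good v (\<Union>Ch)"
      proof (rule goodI)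
        show "subspace (\<Union>Ch)" unfolding subspace_def
        proof (intro conjI ballI allI)
          have "0 \<in> X0" by (rule subspace_0[OF goodD1[OF gX[OF X0]]])
          then show "0 \<in> \<Union>Ch" using X0 by blast
        next
          fix p q assume "p \<in> \<Union>Ch" "q \<in> \<Union>Ch"
          then obtain X Y where XY: "X \<in> Ch" "Y \<in> Ch" "p \<in> X" "q \<in> Y" by blast
          then obtain Z where Z: "Z \<in> Ch" "p \<in> Z" "q \<in> Z" using chc by blast
          have "p + q \<in> Z" by (rule subspace_add[OF goodD1[OF gX[OF Z(1)]] Z(2,3)])
          then show "p + q \<in> \<Union>Ch" using Z(1) by blast
        next
          fix c :: real and p assume "p \<in> \<Union>Ch"
          then obtain X where X: "X \<in> Ch" "p \<in> X" by blast
          have "c *\<^sub>R p \<in> X" by (rule subspace_scale[OF goodD1[OF gX[OF X(1)]] X(2)])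
          then show "c *\<^sub>R p \<in> \<Union>Ch" using X(1) by blast
        qed
      next
        have "(v, norm v) \<in> X0" by (rule goodD2[OF gX[OF X0]])
        then show "(v, norm v) \<in> \<Union>Ch" using X0 by blast
      next
        fix x a assume "(x, a) \<in> \<Union>Ch"
        then obtain X where "X \<in> Ch" "(x, a) \<in> X" by blast
        then show "a \<le> norm x" using goodD3 gX by blast
      qed
      then have "\<Union>Ch \<in> A" unfolding A_def by simp
      then show ?thesis by blast
    qed
  qed
  then obtain M where MA: "M \<in> A" and mx0: "\<forall>X\<in>A. M \<subseteq> X \<longrightarrow> X = M" by blast
  have gM: "good v M" using MA unfolding A_def by simp
  have mx: "good v X \<Longrightarrow> M \<subseteq> X \<Longrightarrow> X = M" for X using mx0 unfolding A_def by simp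
  have tot: "\<exists>a. (x,a) \<in> M" for x
  proof (rule ccontr)
    assume "\<not> (\<exists>a. (x,a) \<in> M)"
    then have "\<forall>a. (x,a) \<notin> M" by blast
    from extend_step[OF gM this] obtain M' where "good v M'" "M \<subseteq> M'" "M' \<noteq> M" by blast
    then show False using mx by blast
  qed
  define f where "f x = (THE a. (x,a) \<in> M)" for x
  have fM: "(x, f x) \<in> M" for x
  proof -
    obtain a where a: "(x,a) \<in> M" using tot by blast
    have "(THE a. (x,a) \<in> M) = a"
    proof (rule the_equality)
      show "(x,a) \<in> M" by (rule a)
      fix b assume "(x,b) \<in> M"
      then show "b = a" by (rule good_fun[OF gM _ a])
    qed
    then show ?thesis unfolding f_def using a by simp
  qed
  have fe: "(x,a) \<in> M \<Longrightarrow> f x = a" for x a by (rule good_fun[OF gM fM])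
  have s: "subspace M" by (rule goodD1[OF gM])
  have fle: "f y \<le> norm y" for y by (rule goodD3[OF gM fM])
  have add: "f (x + y) = f x + f y" for x y
  proof -
    have "(x, f x) + (y, f y) \<in> M" by (rule subspace_add[OF s fM fM])
    then show ?thesis using fe by simp
  qed
  have scl: "f (c *\<^sub>R x) = c *\<^sub>R f x" for c x
  proof -
    have "c *\<^sub>R (x, f x) \<in> M" by (rule subspace_scale[OF s fM])
    then show ?thesis using fe by simp
  qed
  have nb: "norm (f x) \<le> norm x * 1" for x
  proof -
    have "f (-x) = - f x" using scl[of "-1" x] by simp
    then show ?thesis using fle[of x] fle[of "-x"] by simp
  qed
  have "bounded_linear f" by (rule bounded_linear_intro[OF add scl nb])
  moreover have "f v = norm v" by (rule fe[OF goodD2[OF gM]])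
  ultimately show ?thesis using fle by blast
qed

lemma istop_gen: "istopology (generate_topology S)"
  unfolding istopology_def
proof (intro conjI allI impI)
  fix A B assume "generate_topology S A" "generate_topology S B"
  then show "generate_topology S (A \<inter> B)" by (rule generate_topology.Int)
next
  fix K assume "\<forall>k\<in>K. generate_topology S k"
  then show "generate_topology S (\<Union>K)" by (intro generate_topology.UN) blast
qed

lemma weak_open:
  fixes f :: "'a::real_normed_vector \<Rightarrow> real"
  assumes "bounded_linear f"
  shows "openin weak_topology {y. f y > t}"
proof -
  have e: "{y. f y > t} = f -` {t<..}" by auto
  have "f -` {t<..} \<in> {f -` U | (f :: 'a \<Rightarrow> real) U. bounded_linear f \<and> open U}"
    apply (rule CollectI)
    apply (rule exI[where x=f])
    apply (rule exI[where x="{t<..}"])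
    using assms by simp
  then have "{y. f y > t} \<in> {f -` U | (f :: 'a \<Rightarrow> real) U. bounded_linear f \<and> open U}"
    unfolding e .
  then show ?thesis unfolding weak_topology_def topology_inverse'[OF istop_gen]
    by (rule generate_topology.Basis)
qed

lemma ak: "(a::real) - b \<le> (x + w)/2 \<Longrightarrow> a > b + (c + w)/2 + e \<Longrightarrow> x < c + 2*d \<Longrightarrow> d \<le> e \<Longrightarrow> False"
proof -
  assume h: "a - b \<le> (x + w)/2" "a > b + (c + w)/2 + e" "x < c + 2*d" "d \<le> e"
  have 1: "2 * (a - b) \<le> x + w" using h(1) by (simp add: field_simps)
  have 2: "2 * a > 2 * b + (c + w) + 2 * e" using h(2) by (simp add: field_simps)
  show False using 1 2 h(3,4) by argo
qed
lemma ab: "(n1::real) \<le> X + Y \<Longrightarrow> Y \<le> (r + s)/2 \<Longrightarrow> s \<le> r \<Longrightarrow> r \<le> R \<Longrightarrow> n1 \<le> X + R"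
proof -
  assume h: "n1 \<le> X + Y" "Y \<le> (r + s)/2" "s \<le> r" "r \<le> R"
  have "2 * Y \<le> r + s" using h(2) by (simp add: field_simps)
  then show ?thesis using h(1,3,4) by argo
qed
lemma ac: "(y::real) \<le> (c + y)/2 \<Longrightarrow> y \<le> c"
  by (simp add: field_simps)

lemma arith_contra: "2 * (a - b) \<le> (x::real) + w \<Longrightarrow> 2 * b + (c + w) + 2 * e < 2 * a \<Longrightarrow> x < c + 2 * d \<Longrightarrow> d \<le> e \<Longrightarrow> False"
  by argo

lemma orbit_range: "orbit T x = range (\<lambda>n. (T ^^ n) x)"
  unfolding orbit_def by auto

lemma rad_orbit: "rad x (orbit T x) = (SUP n. norm (x - (T ^^ n) x))"
  unfolding rad_def orbit_range image_image by simp

locale setting =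
  fixes C :: "'a::banach set" and T :: "'a \<Rightarrow> 'a"
  assumes TC: "T ` C \<subseteq> C" and K: "orbitally_kannan C T" and D: "diminishes_orbit_radius C T"
begin

definition r where "r x = rad x (orbit T x)"

lemma iterC: "x \<in> C \<Longrightarrow> (T ^^ n) x \<in> C"
  by (induction n) (use TC in auto)

lemma kan: "x \<in> C \<Longrightarrow> y \<in> C \<Longrightarrow> norm (T x - T y) \<le> (r x + r y) / 2"
  using K unfolding orbitally_kannan_def r_def by blast

lemma dimn: "x \<in> C \<Longrightarrow> r ((T ^^ n) x) \<le> r x"
proof (induction n)
  case 0 then show ?case by simp
next
  case (Suc n)
  have "r ((T ^^ Suc n) x) = r (T ((T ^^ n) x))" by simp
  also have "\<dots> \<le> r ((T ^^ n) x)" using D iterC[OF Suc.prems] unfolding diminishes_orbit_radius_def r_def by blast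
  finally show ?case using Suc by simp
qed

lemma bdd: assumes x: "x \<in> C" shows "bdd_above (range (\<lambda>n. norm (x - (T ^^ n) x)))"
proof -
  have "norm (x - (T ^^ n) x) \<le> norm (x - T x) + \<bar>r x\<bar>" for n
  proof (cases n)
    case 0 then show ?thesis by simp
  next
    case (Suc k)
    have e: "norm (x - (T ^^ n) x) = norm ((x - T x) + (T x - T ((T ^^ k) x)))" using Suc by simp
    have t: "norm ((x - T x) + (T x - T ((T ^^ k) x))) \<le> norm (x - T x) + norm (T x - T ((T ^^ k) x))" by (rule norm_triangle_ineq)
    have k: "norm (T x - T ((T ^^ k) x)) \<le> (r x + r ((T ^^ k) x)) / 2" by (rule kan[OF x iterC[OF x]])
    have d: "r ((T ^^ k) x) \<le> r x" by (rule dimn[OF x])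
    have a: "r x \<le> \<bar>r x\<bar>" by simp
    have t2: "norm (x - (T ^^ n) x) \<le> norm (x - T x) + norm (T x - T ((T ^^ k) x))" using e t by simp
    show ?thesis by (rule ab[OF t2 k d a])
  qed
  then show ?thesis by (intro bdd_aboveI2) 
qed

lemma rle: "x \<in> C \<Longrightarrow> norm (x - (T ^^ n) x) \<le> r x"
  unfolding r_def rad_orbit by (rule cSUP_upper[OF UNIV_I bdd])

lemma rnn: "x \<in> C \<Longrightarrow> 0 \<le> r x"
  using rle[of x 0] by simp

lemma rbound: "(\<And>n. norm (x - (T ^^ n) x) \<le> B) \<Longrightarrow> r x \<le> B"
  unfolding r_def rad_orbit by (rule cSUP_least) auto

lemma bddC: "bdd_below (r ` C)"
  using rnn by (intro bdd_belowI2) 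

lemma key:
  assumes wc: "weakly_compact C" and ne: "C \<noteq> {}"
  shows "\<exists>z\<in>C. \<forall>w\<in>C. norm (z - T w) \<le> ((INF x\<in>C. r x) + r w) / 2"
proof (rule ccontr)
  define c where "c = (INF x\<in>C. r x)"
  assume "\<not> ?thesis"
  then have "\<forall>z\<in>C. \<exists>w\<in>C. norm (z - T w) > (c + r w) / 2" unfolding c_def by (auto simp: not_le)
  then have "\<forall>z\<in>C. \<exists>p. fst p \<in> C \<and> norm (z - T (fst p)) > (c + r (fst p)) / 2 \<and> bounded_linear (snd p)
     \<and> (\<forall>y. snd p y \<le> norm y) \<and> snd p (z - T (fst p)) = norm (z - T (fst p))"
    using hahn_banach_norm by fastforce
  then obtain P where P: "\<And>z. z \<in> C \<Longrightarrow> fst (P z) \<in> C \<and> norm (z - T (fst (P z))) > (c + r (fst (P z))) / 2 \<and> bounded_linear (snd (P z))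
     \<and> (\<forall>y. snd (P z) y \<le> norm y) \<and> snd (P z) (z - T (fst (P z))) = norm (z - T (fst (P z)))"
    by metis
  define W where "W z = fst (P z)" for z
  define F where "F z = snd (P z)" for z
  define \<delta> where "\<delta> z = (norm (z - T (W z)) - (c + r (W z)) / 2) / 2" for z
  define U where "U z = {y. F z y > F z (T (W z)) + (c + r (W z)) / 2 + \<delta> z}" for z
  have WC: "z \<in> C \<Longrightarrow> W z \<in> C" and gt: "z \<in> C \<Longrightarrow> norm (z - T (W z)) > (c + r (W z)) / 2"
    and bl: "z \<in> C \<Longrightarrow> bounded_linear (F z)" and Fle: "z \<in> C \<Longrightarrow> F z y \<le> norm y"
    and Fz: "z \<in> C \<Longrightarrow> F z (z - T (W z)) = norm (z - T (W z))" for z y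
    using P unfolding W_def F_def by auto
  have dpos: "z \<in> C \<Longrightarrow> \<delta> z > 0" for z using gt unfolding \<delta>_def by simp
  have opn: "z \<in> C \<Longrightarrow> openin weak_topology (U z)" for z
    unfolding U_def by (rule weak_open[OF bl])
  have zin: "z \<in> C \<Longrightarrow> z \<in> U z" for z
  proof -
    assume z: "z \<in> C"
    have "F z z - F z (T (W z)) = norm (z - T (W z))"
      using Fz[OF z] linear_diff[OF bounded_linear.linear[OF bl[OF z]]] by simp
    then show "z \<in> U z" unfolding U_def \<delta>_def using gt[OF z] by (simp add: field_simps)
  qed
  have "C \<subseteq> topspace weak_topology" and cp: "\<And>\<U>. (\<forall>U\<in>\<U>. openin weak_topology U) \<and> C \<subseteq> \<Union>\<U>
          \<longrightarrow> (\<exists>\<F>. finite \<F> \<and> \<F> \<subseteq> \<U> \<and> C \<subseteq> \<Union>\<F>)"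
    using wc unfolding weakly_compact_def compactin_def by blast+
  have o1: "\<forall>V\<in>U ` C. openin weak_topology V" using opn by auto
  have o2: "C \<subseteq> \<Union>(U ` C)" using zin by auto
  have "\<exists>\<F>. finite \<F> \<and> \<F> \<subseteq> U ` C \<and> C \<subseteq> \<Union>\<F>" using cp[of "U ` C"] o1 o2 by simp
  then obtain \<F> where "finite \<F>" "\<F> \<subseteq> U ` C" "C \<subseteq> \<Union>\<F>" by blast
  then obtain Kf where Kf: "Kf \<subseteq> C" "finite Kf" "\<F> = U ` Kf" by (meson finite_subset_image)
  with \<open>C \<subseteq> \<Union>\<F>\<close> have cov: "C \<subseteq> \<Union>(U ` Kf)" by simp
  have Kne: "Kf \<noteq> {}" using cov ne by auto
  define d where "d = Min (\<delta> ` Kf)"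
  have dp: "d > 0" unfolding d_def using Kf Kne dpos by auto
  have dle: "z \<in> Kf \<Longrightarrow> d \<le> \<delta> z" for z unfolding d_def using Kf by auto
  have "c < c + 2 * d" using dp by simp
  then obtain x where x: "x \<in> C" "r x < c + 2 * d"
    unfolding c_def using cINF_less_iff[OF ne bddC] by blast
  have "T x \<in> C" using TC x by blast
  then obtain z where z: "z \<in> Kf" "T x \<in> U z" using cov by blast
  have zC: "z \<in> C" using z Kf by blast
  have "F z (T x) - F z (T (W z)) = F z (T x - T (W z))"
    using linear_diff[OF bounded_linear.linear[OF bl[OF zC]]] by simp
  also have "\<dots> \<le> norm (T x - T (W z))" by (rule Fle[OF zC])
  also have "\<dots> \<le> (r x + r (W z)) / 2" by (rule kan[OF x(1) WC[OF zC]])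
  finally have A: "F z (T x) - F z (T (W z)) \<le> (r x + r (W z)) / 2" .
  have B: "F z (T x) > F z (T (W z)) + (c + r (W z)) / 2 + \<delta> z" using z(2) unfolding U_def mem_Collect_eq .
  show False by (rule ak[OF A B x(2) dle[OF z(1)]])
qed

lemma fixorb: "T p = p \<Longrightarrow> (T ^^ n) p = p"
  by (induction n) auto

lemma fixr: "p \<in> C \<Longrightarrow> T p = p \<Longrightarrow> r p = 0"
  using rbound[of p 0] fixorb[of p] rnn[of p] by fastforce

lemma attain:
  assumes wc: "weakly_compact C" and ne: "C \<noteq> {}"
  shows "\<exists>z\<in>C. r z = (INF x\<in>C. r x)"
proof -
  define c where "c = (INF x\<in>C. r x)"
  have c0: "0 \<le> c" unfolding c_def by (rule cINF_greatest[OF ne rnn])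
  obtain z where z: "z \<in> C" and zk: "\<And>w. w \<in> C \<Longrightarrow> norm (z - T w) \<le> (c + r w) / 2"
    using key[OF wc ne] unfolding c_def by blast
  have "norm (z - (T ^^ n) z) \<le> (c + r z) / 2" for n
  proof (cases n)
    case 0 then show ?thesis using c0 rnn[OF z] by simp
  next
    case (Suc k)
    have "norm (z - (T ^^ n) z) = norm (z - T ((T ^^ k) z))" using Suc by simp
    also have "\<dots> \<le> (c + r ((T ^^ k) z)) / 2" by (rule zk[OF iterC[OF z]])
    also have "\<dots> \<le> (c + r z) / 2" using dimn[OF z, of k] by simp
    finally show ?thesis .
  qed
  then have "r z \<le> (c + r z) / 2" by (rule rbound)
  then have "r z \<le> c" by (rule ac)
  moreover have "c \<le> r z" unfolding c_def by (rule cINF_lower[OF bddC z])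
  ultimately have "r z = c" by (rule antisym)
  then show ?thesis using z unfolding c_def by blast
qed

end

theorem theorem4p4:
  fixes C :: "'a::banach set" and T :: "'a \<Rightarrow> 'a"
  assumes "weakly_compact C" and "convex C" and "C \<noteq> {}"
    and "T ` C \<subseteq> C"
    and "orbitally_kannan C T" and "diminishes_orbit_radius C T"
  shows "((\<exists>!x. x \<in> C \<and> T x = x) \<longleftrightarrow> (INF x\<in>C. rad x (orbit T x)) = 0)
    \<and> ((INF x\<in>C. rad x (orbit T x)) = 0 \<longleftrightarrow>
         (\<forall>x\<in>C. rad x (orbit T x) > 0 \<longrightarrow> (\<exists>y\<in>C. rad x (orbit T x) > rad y (orbit T y))))"
proof -
  interpret S: setting C T using assms(4-6) by unfold_locales
  have eq: "rad x (orbit T x) = S.r x" for x by (simp add: S.r_def)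
  define c where "c = (INF x\<in>C. S.r x)"
  have c0: "0 \<le> c" unfolding c_def by (rule cINF_greatest[OF assms(3) S.rnn])
  have cl: "x \<in> C \<Longrightarrow> c \<le> S.r x" for x unfolding c_def by (rule cINF_lower[OF S.bddC])
  obtain z where z: "z \<in> C" "S.r z = c" using S.attain[OF assms(1,3)] unfolding c_def by blast
  have A: "(\<exists>!x. x \<in> C \<and> T x = x) \<longleftrightarrow> c = 0"
  proof
    assume "\<exists>!x. x \<in> C \<and> T x = x"
    then obtain p where "p \<in> C" "T p = p" by blast
    then have "S.r p = 0" by (rule S.fixr)
    then show "c = 0" using cl[OF \<open>p \<in> C\<close>] c0 by simp
  next
    assume c: "c = 0"
    have "norm (z - (T ^^ 1) z) \<le> 0" using S.rle[OF z(1), of 1] z(2) c by simp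
    then have fz: "T z = z" by simp
    show "\<exists>!x. x \<in> C \<and> T x = x"
    proof (rule ex1I[of _ z])
      show "z \<in> C \<and> T z = z" using z fz by simp
    next
      fix q assume q: "q \<in> C \<and> T q = q"
      have "norm (T q - T z) \<le> (S.r q + S.r z) / 2" using S.kan q z by blast
      then have "norm (q - z) \<le> 0" using S.fixr[of q] S.fixr[OF z(1) fz] q fz by simp
      then show "q = z" by simp
    qed
  qed
  have B: "c = 0 \<longleftrightarrow> (\<forall>x\<in>C. S.r x > 0 \<longrightarrow> (\<exists>y\<in>C. S.r x > S.r y))"
  proof
    assume "c = 0"
    then show "\<forall>x\<in>C. S.r x > 0 \<longrightarrow> (\<exists>y\<in>C. S.r x > S.r y)" using z by force
  next
    assume H: "\<forall>x\<in>C. S.r x > 0 \<longrightarrow> (\<exists>y\<in>C. S.r x > S.r y)"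
    show "c = 0"
    proof (rule ccontr)
      assume "c \<noteq> 0"
      then have "S.r z > 0" using z c0 by simp
      then obtain y where "y \<in> C" "S.r z > S.r y" using H z by blast
      then show False using cl z by fastforce
    qed
  qed
  show ?thesis unfolding eq using A B unfolding c_def by simp
qed

end
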